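(* Let $n\ge 2$ be an integer and $M$ a real $n\times n$ matrix with all entries in $\{0,1\}$. Let $t$ be the number of entries equal to $1$ and $k := t/n$. Then: if $t < n$: $|\det M| \le k^{n/2}$; if $t = n$: $|\det M| \le 1$; if $t > n$: $|\det M| \le k^{\frac{n+1}{2}}\left(\frac{n-k}{n-1}\right)^{\frac{n-1}{2}}$. *)

theory Defs
  imports "HOL-Analysis.Analysis"
begin

end

theory Submission imports Defs "HOL-Analysis.Analysis" begin
lemma row_chi: "row i (\<chi> k. f k) = (f i :: 'a::zero^'n)"
  by (simp add: row_def vec_eq_iff)

lemma orth_exists:
  fixes A :: "real^'n^'n"
  assumes "finite S"
  shows "\<exists>B. det B = det A \<and> (\<forall>i. norm (row i B) \<le> norm (row i A))
           \<and> (\<forall>i\<in>S. \<forall>j\<in>S. i \<noteq> j \<longrightarrow> row i B \<bullet> row j B = 0)"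
  using assms
proof (induction S rule: finite_induct)
  case empty
  then show ?case by (intro exI[of _ A]) auto
next
  case (insert x F)
  then obtain B where B1: "det B = det A" and B2: "\<forall>i. norm (row i B) \<le> norm (row i A)"
    and B3: "\<forall>i\<in>F. \<forall>j\<in>F. i \<noteq> j \<longrightarrow> row i B \<bullet> row j B = 0" by blast
  define r where "r = row x B"
  define c where "c j = (r \<bullet> row j B) / (row j B \<bullet> row j B)" for j
  define p where "p = (\<Sum>j\<in>F. c j *\<^sub>R row j B)"
  define B' where "B' = (\<chi> k. if k = x then row x B + (- p) else row k B)"
  have rowB': "row k B' = (if k = x then r - p else row k B)" for k
    unfolding B'_def row_chi r_def by simp
  have "- p \<in> vec.span {row j B |j. j \<noteq> x}"
    unfolding p_def span_vec_eq
    using insert.hyps(2)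
    by (intro span_neg span_sum span_scale span_base) auto
  then have d: "det B' = det B" unfolding B'_def by (rule det_row_span)
  have pj: "p \<bullet> row j B = c j * (row j B \<bullet> row j B)" if "j \<in> F" for j
  proof -
    have "p \<bullet> row j B = (\<Sum>l\<in>F. c l * (row l B \<bullet> row j B))"
      unfolding p_def by (simp add: inner_sum_left)
    also have "\<dots> = (\<Sum>l\<in>F. if l = j then c j * (row j B \<bullet> row j B) else 0)"
      using B3 that by (intro sum.cong) auto
    also have "\<dots> = c j * (row j B \<bullet> row j B)" using that insert.hyps(1) by simp
    finally show ?thesis .
  qed
  have o: "(r - p) \<bullet> row j B = 0" if "j \<in> F" for j
  proof (cases "row j B = 0")
    case True then show ?thesis by simp
  next
    case False
    then have "row j B \<bullet> row j B \<noteq> 0" by simp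
    then show ?thesis using pj[OF that] by (simp add: inner_diff_left c_def)
  qed
  have "(r - p) \<bullet> (\<Sum>j\<in>F. c j *\<^sub>R row j B) = 0"
    by (simp add: inner_sum_right o)
  then have "p \<bullet> (r - p) = 0" unfolding p_def[symmetric] by (metis inner_commute)
  then have "norm r ^ 2 = norm (r - p) ^ 2 + norm p ^ 2"
    by (metis add.commute diff_add_cancel norm_add_Pythagorean orthogonal_def inner_commute)
  then have "norm (r - p) ^ 2 \<le> norm r ^ 2" by simp
  then have "norm (r - p) \<le> norm r" by (rule power2_le_imp_le) simp
  show ?case
  proof (intro exI[of _ B'] conjI allI ballI impI)
    show "det B' = det A" using d B1 by simp
    show "norm (row i B') \<le> norm (row i A)" for i
      using B2[rule_format, of i] \<open>norm (r - p) \<le> norm r\<close> unfolding rowB' r_def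
      by (cases "i = x") auto
    show "row i B' \<bullet> row j B' = 0" if asm: "i \<in> insert x F" "j \<in> insert x F" "i \<noteq> j" for i j
    proof -
      consider "i = x" "j \<in> F" | "j = x" "i \<in> F" | "i \<in> F" "j \<in> F"
        using asm by auto
      then show ?thesis
      proof cases
        case 1 then have "j \<noteq> x" using insert.hyps(2) by auto
        then show ?thesis using o[of j] 1 by (simp add: rowB')
      next
        case 2 then have "(r - p) \<bullet> row i B = 0" using o by simp
        moreover have "i \<noteq> x" using 2 insert.hyps(2) by auto
        ultimately show ?thesis using 2 by (simp add: rowB' inner_commute[of "row i B"])
      next
        case 3 then show ?thesis using B3 asm insert.hyps(2) by (auto simp add: rowB')
      qed
    qed
  qed
qed

lemma hadamard_sq:
  fixes A :: "real^'n^'n"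
  shows "det A ^ 2 \<le> (\<Prod>i\<in>UNIV. norm (row i A) ^ 2)"
proof -
  obtain B where B1: "det B = det A" and B2: "\<forall>i. norm (row i B) \<le> norm (row i A)"
    and B3: "\<forall>i j. i \<noteq> j \<longrightarrow> row i B \<bullet> row j B = 0"
    using orth_exists[of "UNIV::'n set" A] by auto
  have e: "(B ** transpose B) $ i $ j = row i B \<bullet> row j B" for i j
    by (simp add: matrix_matrix_mult_def transpose_def inner_vec_def row_def)
  have "det B ^ 2 = det (B ** transpose B)"
    by (simp add: det_mul det_transpose power2_eq_square)
  also have "\<dots> = (\<Prod>i\<in>UNIV. row i B \<bullet> row i B)"
    by (subst det_diagonal) (auto simp: e B3)
  also have "\<dots> = (\<Prod>i\<in>UNIV. norm (row i B) ^ 2)"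
    by (simp add: power2_norm_eq_inner)
  also have "\<dots> \<le> (\<Prod>i\<in>UNIV. norm (row i A) ^ 2)"
    using B2 by (intro prod_mono) (auto intro!: power_mono)
  finally show ?thesis using B1 by simp
qed

lemma amgm:
  fixes x :: "'a \<Rightarrow> real"
  assumes "finite S" "S \<noteq> {}" "\<And>i. i \<in> S \<Longrightarrow> x i \<ge> 0"
  shows "(\<Prod>i\<in>S. x i) \<le> ((\<Sum>i\<in>S. x i) / card S) ^ card S"
proof -
  let ?P = "\<Prod>i\<in>S. x i"
  have c: "card S > 0" using assms by (simp add: card_gt_0_iff)
  have P0: "?P \<ge> 0" using assms by (simp add: prod_nonneg)
  have g: "?P powr (1 / card S) \<le> (\<Sum>i\<in>S. x i) / card S"
    using arith_geom_mean[OF assms] by (simp add: sum_divide_distrib)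
  show ?thesis
  proof (cases "?P = 0")
    case True
    have "(\<Sum>i\<in>S. x i) / card S \<ge> 0" using assms by (simp add: sum_nonneg)
    then show ?thesis using True by simp
  next
    case False
    then have Ppos: "?P > 0" using P0 by simp
    have "?P = (?P powr (1 / card S)) ^ card S"
      using Ppos c by (simp add: powr_realpow[symmetric] powr_powr)
    also have "\<dots> \<le> ((\<Sum>i\<in>S. x i) / card S) ^ card S"
      by (intro power_mono g) simp
    finally show ?thesis .
  qed
qed

lemma powr_sq: "0 \<le> (x::real) \<Longrightarrow> (x powr a) ^ 2 = x powr (2 * a)"
proof (cases "x = 0")
  case False
  assume "0 \<le> x"
  then have "x > 0" using False by simp
  then show ?thesis by (simp add: powr_realpow[symmetric] powr_powr mult.commute)
qed simp

lemma powr_nat': "0 \<le> (x::real) \<Longrightarrow> 0 < m \<Longrightarrow> x powr real m = x ^ m"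
  by (cases "x = 0") (auto simp: powr_realpow)

lemma decr:
  fixes T a b :: real and q :: nat
  assumes "q \<ge> 1" "0 \<le> a" "a \<le> b" "b \<le> T" "T \<le> (real q + 1) * a"
  shows "b * (T - b) ^ q \<le> a * (T - a) ^ q"
proof -
  let ?f = "\<lambda>x. x * (T - x) ^ q"
  have "?f b \<le> ?f a"
  proof (rule DERIV_nonpos_imp_nonincreasing[OF assms(3)])
    fix x assume x: "a \<le> x" "x \<le> b"
    have D: "(?f has_real_derivative ((T - x) ^ q - x * (real q * (T - x) ^ (q - 1)))) (at x)"
      by (auto intro!: derivative_eq_intros)
    have e: "(T - x) ^ q = (T - x) * (T - x) ^ (q - 1)"
      using assms(1) by (metis One_nat_def Suc_pred less_le_trans power_Suc zero_less_one)
    have "(T - x) ^ q - x * (real q * (T - x) ^ (q - 1)) = (T - x) ^ (q - 1) * (T - (real q + 1) * x)"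
      unfolding e by (simp add: algebra_simps)
    also have "\<dots> \<le> 0"
    proof (rule mult_nonneg_nonpos)
      show "0 \<le> (T - x) ^ (q - 1)" using x assms by simp
      have "(real q + 1) * a \<le> (real q + 1) * x" using x by (intro mult_left_mono) auto
      then show "T - (real q + 1) * x \<le> 0" using assms(5) by linarith
    qed
    finally show "\<exists>y. (?f has_real_derivative y) (at x) \<and> y \<le> 0" using D by blast
  qed
  then show ?thesis by simp
qed

lemma frob:
  fixes X :: "real^'n^'m"
  shows "(\<Sum>i\<in>UNIV. norm (row i X) ^ 2) = (\<Sum>j\<in>UNIV. norm (column j X) ^ 2)"
  by (simp add: power2_norm_eq_inner inner_vec_def row_def column_def) (rule sum.swap)

lemma orth_norm:
  fixes Q :: "real^'n^'n"
  assumes "orthogonal_matrix Q"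
  shows "norm (Q *v v) = norm v"
proof -
  have "orthogonal_transformation (\<lambda>v. Q *v v)"
    using assms by (simp add: orthogonal_transformation_matrix matrix_of_matrix_vector_mul)
  then show ?thesis by (rule orthogonal_transformation_norm)
qed

lemma sigma_eq: "{(i, j). P i j} = Sigma UNIV (\<lambda>i. {j. P i j})" by auto

theorem mainTheorem13:
  fixes M :: "real ^ 'n ^ 'n"
  assumes n2: "CARD('n) \<ge> 2"
    and entries01: "\<forall>i j. M $ i $ j \<in> {0, 1}"
  shows "let n = CARD('n); t = card {(i, j). M $ i $ j = 1}; k = real t / real n in
         (t < n \<longrightarrow> \<bar>det M\<bar> \<le> k powr (real n / 2))
       \<and> (t = n \<longrightarrow> \<bar>det M\<bar> \<le> 1)
       \<and> (t > n \<longrightarrow> \<bar>det M\<bar> \<le> k powr ((real n + 1) / 2)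
              * ((real n - k) / (real n - 1)) powr ((real n - 1) / 2))"
proof -
  define n where "n = CARD('n)"
  define t where "t = card {(i, j). M $ i $ j = 1}"
  define k where "k = real t / real n"
  define R where "R i = card {j. M $ i $ j = 1}" for i
  have npos: "real n > 0" unfolding n_def by simp
  have sq: "M $ i $ j * M $ i $ j = M $ i $ j" for i j
    using entries01 by (metis insert_iff mult_1 mult_zero_left singletonD)
  have nn: "M $ i $ j \<ge> 0" for i j
    using entries01 by (metis insert_iff order_refl singletonD zero_le_one)
  have rowsum: "(\<Sum>j\<in>UNIV. M $ i $ j) = real (R i)" for i
  proof -
    have "(\<Sum>j\<in>UNIV. M $ i $ j) = (\<Sum>j\<in>UNIV. of_bool (M $ i $ j = 1))"
      proof (rule sum.cong)
      fix j have "M $ i $ j \<in> {0, 1}" using entries01 by blast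
      then show "M $ i $ j = of_bool (M $ i $ j = 1)" by auto
    qed simp
    also have "\<dots> = real (R i)" by (simp add: sum_of_bool_eq R_def)
    finally show ?thesis .
  qed
  have rownorm: "norm (row i M) ^ 2 = real (R i)" for i
    by (simp add: power2_norm_eq_inner inner_vec_def row_def sq rowsum)
  have tsum: "t = (\<Sum>i\<in>UNIV. R i)"
    unfolding t_def R_def sigma_eq by (subst card_SigmaI) auto
  have treal: "real t = (\<Sum>i\<in>UNIV. norm (row i M) ^ 2)"
    by (simp add: rownorm tsum)
  have tle: "t \<le> n * n"
  proof -
    have "t \<le> card (UNIV :: ('n \<times> 'n) set)" unfolding t_def by (rule card_mono) auto
    also have "\<dots> = n * n" unfolding n_def by (metis UNIV_Times_UNIV card_cartesian_product)
    finally show ?thesis .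
  qed
  have k0: "k \<ge> 0" unfolding k_def by simp
  have gen: "det M ^ 2 \<le> k ^ n"
  proof -
    have "det M ^ 2 \<le> (\<Prod>i\<in>UNIV. norm (row i M) ^ 2)" by (rule hadamard_sq)
    also have "\<dots> \<le> ((\<Sum>i\<in>UNIV. norm (row i M) ^ 2) / card (UNIV::'n set)) ^ card (UNIV::'n set)"
      by (rule amgm) auto
    also have "\<dots> = k ^ n" unfolding k_def n_def treal by simp
    finally show ?thesis .
  qed
  have gen2: "\<bar>det M\<bar> \<le> k powr (real n / 2)"
  proof (rule power2_le_imp_le)
    show "\<bar>det M\<bar> ^ 2 \<le> (k powr (real n / 2)) ^ 2"
      using gen k0 npos by (simp add: powr_sq powr_nat')
  qed simp
  have part3: "\<bar>det M\<bar> \<le> k powr ((real n + 1) / 2) * ((real n - k) / (real n - 1)) powr ((real n - 1) / 2)"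
    if tn: "t > n"
  proof -
    have n1: "n \<ge> 2" using n2 unfolding n_def .
    obtain k0 :: 'n where True by simp
    define u :: "real^'n" where "u = (1 / sqrt (real n)) *\<^sub>R 1"
    have "u \<bullet> u = 1"
      using npos by (simp add: u_def inner_vec_def n_def)
    then have nu: "norm u = 1" by (simp add: norm_eq_sqrt_inner)
    obtain A where oA: "orthogonal_matrix A" and Au: "A *v axis k0 1 = u"
      using orthogonal_matrix_exists_basis[OF nu] by blast
    have Aik: "A $ i $ k0 = u $ i" for i
    proof -
      have "(A *v axis k0 1) $ i = A $ i $ k0"
        by (simp add: matrix_vector_mult_def axis_def if_distrib cong: if_cong)
      then show ?thesis using Au by simp
    qed
    define N where "N = transpose A ** M"
    have "det A = 1 \<or> det A = -1" using det_orthogonal_matrix[OF oA] .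
    then have dN: "det N ^ 2 = det M ^ 2"
      unfolding N_def by (auto simp: det_mul det_transpose power2_eq_square)
    define x where "x i = norm (row i N) ^ 2" for i
    have x0: "x i \<ge> 0" for i unfolding x_def by simp
    have colN: "column j N = transpose A *v column j M" for j
      by (simp add: N_def vec_eq_iff column_def matrix_matrix_mult_def matrix_vector_mult_def)
    have oAt: "orthogonal_matrix (transpose A)" using oA by (simp add: orthogonal_matrix_transpose)
    have xsum: "(\<Sum>i\<in>UNIV. x i) = real t"
      unfolding x_def treal frob colN orth_norm[OF oAt] ..
    define c where "c j = (\<Sum>i\<in>UNIV. M $ i $ j)" for j
    have csum: "(\<Sum>j\<in>UNIV. c j) = real t"
      unfolding c_def tsum by (subst sum.swap) (simp add: rowsum)
    have xk0: "x k0 = (\<Sum>j\<in>UNIV. c j ^ 2) / real n"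
    proof -
      have rk: "row k0 N $ j = c j / sqrt (real n)" for j
        by (simp add: N_def row_def matrix_matrix_mult_def transpose_def Aik u_def c_def sum_divide_distrib)
      have "x k0 = (\<Sum>j\<in>UNIV. row k0 N $ j * row k0 N $ j)"
        unfolding x_def power2_norm_eq_inner inner_vec_def by simp
      then have "x k0 = (\<Sum>j\<in>UNIV. (c j / sqrt (real n)) ^ 2)"
        unfolding rk by (simp add: power2_eq_square)
      also have "\<dots> = (\<Sum>j\<in>UNIV. c j ^ 2) / real n"
        using npos by (simp add: power_divide sum_divide_distrib)
      finally show ?thesis .
    qed
    have cs: "(real t) ^ 2 \<le> real n * (\<Sum>j\<in>UNIV. c j ^ 2)"
      using Cauchy_Schwarz_ineq_sum[of "\<lambda>_. 1" c UNIV] csum by (simp add: n_def)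
    have tnk: "real t = real n * k" unfolding k_def using npos by simp
    define \<mu> where "\<mu> = x k0"
    have mu_ge: "k ^ 2 \<le> \<mu>"
    proof -
      have "k ^ 2 = (real t) ^ 2 / (real n * real n)" unfolding k_def by (simp add: power_divide power2_eq_square)
      also have "\<dots> \<le> (real n * (\<Sum>j\<in>UNIV. c j ^ 2)) / (real n * real n)"
        using cs npos by (intro divide_right_mono) auto
      also have "\<dots> = \<mu>" unfolding \<mu>_def xk0 using npos by simp
      finally show ?thesis .
    qed
    define S where "S = UNIV - {k0}"
    have cardS: "card S = n - 1" unfolding S_def n_def by (simp add: card_Diff_singleton)
    have Sne: "S \<noteq> {}" using cardS n1 by auto
    have sumS: "(\<Sum>i\<in>S. x i) = real t - \<mu>"
      unfolding S_def \<mu>_def using xsum sum.remove[of UNIV k0 x] by simp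
    have prodU: "(\<Prod>i\<in>UNIV. x i) = \<mu> * (\<Prod>i\<in>S. x i)"
      unfolding S_def \<mu>_def using prod.remove[of UNIV k0 x] by simp
    have mu_le: "\<mu> \<le> real t" using sumS sum_nonneg[of S x] x0 by simp
    have mu0: "\<mu> \<ge> 0" unfolding \<mu>_def by (rule x0)
    have "det M ^ 2 \<le> (\<Prod>i\<in>UNIV. x i)"
      using hadamard_sq[of N] dN unfolding x_def by simp
    also have "\<dots> \<le> \<mu> * ((real t - \<mu>) / real (n - 1)) ^ (n - 1)"
      unfolding prodU
      using amgm[of S x] Sne x0 mu0 unfolding sumS cardS by (intro mult_left_mono) auto
    also have "\<dots> = (\<mu> * (real t - \<mu>) ^ (n - 1)) / real (n - 1) ^ (n - 1)"
      by (simp add: power_divide)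
    also have "\<dots> \<le> (k ^ 2 * (real t - k ^ 2) ^ (n - 1)) / real (n - 1) ^ (n - 1)"
    proof (intro divide_right_mono decr)
      show "1 \<le> n - 1" using n1 by simp
      show "real t \<le> (real (n - 1) + 1) * k ^ 2"
      proof -
        have "real (n - 1) + 1 = real n" using n1 by (simp add: of_nat_diff)
        moreover have "real t \<le> real n * k ^ 2"
        proof -
          have "real n * k ^ 2 = real t * (real t / real n)"
            unfolding k_def using npos by (simp add: power2_eq_square)
          moreover have "real t / real n \<ge> 1" using tn npos by simp
          ultimately show ?thesis by (metis mult_left_mono mult.right_neutral of_nat_0_le_iff)
        qed
        ultimately show ?thesis by simp
      qed
    qed (use mu_ge mu_le in auto)
    also have "\<dots> = k ^ (n + 1) * ((real n - k) / real (n - 1)) ^ (n - 1)"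
    proof -
      have "real t - k ^ 2 = k * (real n - k)" unfolding tnk by (simp add: power2_eq_square algebra_simps)
      then have "k ^ 2 * (real t - k ^ 2) ^ (n - 1) = k ^ (n + 1) * (real n - k) ^ (n - 1)"
        using n1 by (simp add: power_mult_distrib power_add[symmetric])
      then show ?thesis by (simp add: power_divide)
    qed
    finally have D: "det M ^ 2 \<le> k ^ (n + 1) * ((real n - k) / real (n - 1)) ^ (n - 1)" .
    have kn: "k \<le> real n"
    proof -
      have "real t \<le> real n * real n" using tle by (metis of_nat_le_iff of_nat_mult)
      then show ?thesis unfolding k_def using npos by (simp add: divide_le_eq)
    qed
    have rn1: "real n - 1 = real (n - 1)" using n1 by (simp add: of_nat_diff)
    have w0: "(real n - k) / (real n - 1) \<ge> 0" using kn n1 by simp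
    show ?thesis
    proof (rule power2_le_imp_le)
      have "(k powr ((real n + 1) / 2) * ((real n - k) / (real n - 1)) powr ((real n - 1) / 2)) ^ 2
          = k powr real (n + 1) * ((real n - k) / (real n - 1)) powr real (n - 1)"
      proof -
        have e1: "2 * ((real n + 1) / 2) = real (n + 1)" by simp
        have e2: "2 * ((real n - 1) / 2) = real (n - 1)" unfolding rn1 by simp
        show ?thesis
          unfolding power_mult_distrib powr_sq[OF k0] powr_sq[OF w0] e1 e2 ..
      qed
      also have "\<dots> = k ^ (n + 1) * ((real n - k) / real (n - 1)) ^ (n - 1)"
      proof -
        have p1: "k powr real (n + 1) = k ^ (n + 1)" by (rule powr_nat'[OF k0]) simp
        have p2: "((real n - k) / (real n - 1)) powr real (n - 1) = ((real n - k) / (real n - 1)) ^ (n - 1)"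
          by (rule powr_nat'[OF w0]) (use n1 in simp)
        show ?thesis unfolding p1 p2 unfolding rn1 ..
      qed
      finally show "\<bar>det M\<bar> ^ 2 \<le> (k powr ((real n + 1) / 2) * ((real n - k) / (real n - 1)) powr ((real n - 1) / 2)) ^ 2"
        using D by simp
      show "0 \<le> k powr ((real n + 1) / 2) * ((real n - k) / (real n - 1)) powr ((real n - 1) / 2)"
        by simp
    qed
  qed
  show ?thesis
    unfolding Let_def n_def[symmetric] t_def[symmetric] k_def[symmetric]
  proof (intro conjI impI)
    show "\<bar>det M\<bar> \<le> k powr (real n / 2)" if "t < n" using gen2 .
    show "\<bar>det M\<bar> \<le> 1" if "t = n"
      using gen2 that npos unfolding k_def by simp
    show "\<bar>det M\<bar> \<le> k powr ((real n + 1) / 2) * ((real n - k) / (real n - 1)) powr ((real n - 1) / 2)"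
      if "n < t" using part3 that .
  qed
qed

end
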